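(* Suppose: (a) $\lambda$ is a singular cardinal with $\kappa=\mathrm{cf}(\lambda)>\aleph_0$; (b) $f$ is a function from ${}^{\omega>}\lambda$ (finite sequences of ordinals $<\lambda$) to subsets of ${}^{\omega\ge}\lambda$ (sequences of length $\le\omega$ of ordinals $<\lambda$), each value of cardinality $<\kappa$; (c) $\lambda=\sum_{i<\kappa}\lambda_i$ with $\langle\lambda_i:i<\kappa\rangle$ strictly increasing and continuous; (d) $S\subseteq\{i<\kappa:\mathrm{cf}(i)=\aleph_0\}$ is stationary in $\kappa$; (e) for $i\in S$, $\lambda_i=\sum_{n<\omega}\lambda_{i,n}$ where $\kappa<\lambda_{i,0}$ and each $\lambda_{i,n}$ is a regular cardinal with $\lambda_{i,n}<\lambda_{i,n+1}$; (f) for every regular $\mu<\lambda$ and $n<\omega$, $\mathbf I^n_\mu$ is a $\kappa^+$-complete ideal on $\mu$ containing all bounded subsets of $\mu$; (g) if $i_1,i_2\in S$, $n<\omega$ and $\{j<\kappa:\lambda_j<\lambda_{i_1,n}\}=\{j<\kappa:\lambda_j<\lambda_{i_2,n}\}$, then $\lambda_{i_1,n}=\lambda_{i_2,n}$. Then there is a club $C\subseteq\kappa$ such that for each $i\in C\cap S$ there is a set $\mathscr T$ with: (1) $\mathscr T\subseteq\bigcup_{n<\omega}\prod_{m<n}\lambda_{i,m}$, $\langle\rangle\in\mathscr T$, and $\mathscr T$ is closed under initial segments; (2) if $\eta\in\mathscr T$ and $\ell g(\eta)=n$ then $\{\alpha<\lambda_{i,n}:\eta^\frown\langle\alpha\rangle\in\mathscr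 T\}\notin\mathbf I^n_{\lambda_{i,n}}$; (3) for every $\eta\in\mathscr T$, $f(\eta)\subseteq{}^{\omega\ge}(\lambda_i)$, i.e. every sequence in $f(\eta)$ has all its values $<\lambda_i$.
   Context: An ideal on a set $X$ is a family of subsets of $X$ closed under subsets and finite unions, not containing $X$; it is $\mu$-complete if closed under unions of fewer than $\mu$ members. $\ell g(\eta)$ denotes the length of a sequence $\eta$. *)

theory Defs
  imports Main "HOL-Library.Equipollence"
begin

text \<open>Ordinals are modelled as elements of an arbitrary well-ordered type 'a;
  the ordinal alpha is identified with the set of its predecessors {..<alpha}.\<close>

definition is_cardinal :: "'a::wellorder \<Rightarrow> bool" where
  "is_cardinal a \<longleftrightarrow> (\<forall>b<a. \<not> ({..<b} \<approx> {..<a}))"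

definition cofinal_map :: "'a::wellorder \<Rightarrow> 'a \<Rightarrow> ('a \<Rightarrow> 'a) \<Rightarrow> bool" where
  "cofinal_map b a g \<longleftrightarrow> g ` {..<b} \<subseteq> {..<a} \<and> (\<forall>c<a. \<exists>d<b. c \<le> g d)"

definition cf :: "'a::wellorder \<Rightarrow> 'a" where
  "cf a = (LEAST b. \<exists>g. cofinal_map b a g)"

definition regular_cardinal :: "'a::wellorder \<Rightarrow> bool" where
  "regular_cardinal m \<longleftrightarrow> is_cardinal m \<and> infinite {..<m} \<and> cf m = m"

definition singular_cardinal :: "'a::wellorder \<Rightarrow> bool" where
  "singular_cardinal m \<longleftrightarrow> is_cardinal m \<and> infinite {..<m} \<and> cf m < m"

definition cf_omega :: "'a::wellorder \<Rightarrow> bool" where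
  "cf_omega i \<longleftrightarrow> (\<exists>s::nat \<Rightarrow> 'a. strict_mono s \<and> (\<forall>n. s n < i) \<and> (\<forall>b<i. \<exists>n. b < s n))"

definition is_limit :: "'a::wellorder \<Rightarrow> bool" where
  "is_limit d \<longleftrightarrow> (\<exists>b. b < d) \<and> (\<forall>b<d. \<exists>c<d. b < c)"

definition club :: "'a::wellorder \<Rightarrow> 'a set \<Rightarrow> bool" where
  "club k C \<longleftrightarrow> C \<subseteq> {..<k} \<and> (\<forall>b<k. \<exists>c\<in>C. b < c)
     \<and> (\<forall>d<k. ((\<exists>b. b < d) \<and> (\<forall>b<d. \<exists>c\<in>C. b < c \<and> c < d)) \<longrightarrow> d \<in> C)"

definition stationary :: "'a::wellorder \<Rightarrow> 'a set \<Rightarrow> bool" where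
  "stationary k S \<longleftrightarrow> S \<subseteq> {..<k} \<and> (\<forall>C. club k C \<longrightarrow> S \<inter> C \<noteq> {})"

definition ideal_on :: "'b set \<Rightarrow> 'b set set \<Rightarrow> bool" where
  "ideal_on X I \<longleftrightarrow> I \<subseteq> Pow X \<and> {} \<in> I \<and> X \<notin> I
     \<and> (\<forall>A\<in>I. \<forall>B. B \<subseteq> A \<longrightarrow> B \<in> I) \<and> (\<forall>A\<in>I. \<forall>B\<in>I. A \<union> B \<in> I)"

text \<open>kappa^+-complete: closed under unions of at most kappa many members.\<close>
definition succ_complete :: "'a::wellorder \<Rightarrow> 'b set set \<Rightarrow> bool" where
  "succ_complete k I \<longleftrightarrow> (\<forall>F. F \<subseteq> I \<and> F \<lesssim> {..<k} \<longrightarrow> \<Union>F \<in> I)"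

text \<open>Sequences of length at most omega: finite lists or functions on nat.\<close>
type_synonym 'a omseq = "'a list + (nat \<Rightarrow> 'a)"

fun seq_vals :: "'a omseq \<Rightarrow> 'a set" where
  "seq_vals (Inl xs) = set xs"
| "seq_vals (Inr s) = range s"

end

theory Submission
  imports Defs
begin


inductive_set its :: "('b set \<Rightarrow> 'b set) \<Rightarrow> 'b set set" for F :: "'b set \<Rightarrow> 'b set" where
  its_step: "X \<in> its F \<Longrightarrow> F X \<in> its F"
| its_Un: "\<forall>X\<in>M. X \<in> its F \<Longrightarrow> \<Union>M \<in> its F"

lemma its_le: assumes "mono F" "X \<in> its F" shows "X \<subseteq> F X"
  using assms(2)
proof induct
  case (its_step X) then show ?case using assms(1) by (simp add: mono_def)
next
  case (its_Un M)
  have "\<And>Z. Z \<in> M \<Longrightarrow> Z \<subseteq> F (\<Union>M)"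
  proof -
    fix Z assume "Z \<in> M"
    have "Z \<subseteq> \<Union>M" using \<open>Z \<in> M\<close> by blast
    then have "F Z \<subseteq> F (\<Union>M)" using assms(1) by (simp add: mono_def)
    moreover have "Z \<subseteq> F Z" using its_Un \<open>Z \<in> M\<close> by blast
    ultimately show "Z \<subseteq> F (\<Union>M)" by blast
  qed
  then show ?case by blast
qed

lemma its_extreme_cmp:
  assumes "mono F" "X \<in> its F" "\<forall>Y\<in>its F. Y \<subset> X \<longrightarrow> F Y \<subseteq> X" "Y \<in> its F"
  shows "Y \<subseteq> X \<or> F X \<subseteq> Y"
  using assms(4)
proof induct
  case (its_step Y0)
  have "Y0 \<subseteq> F Y0" using its_le[OF assms(1) its_step(1)] .
  then show ?case using its_step assms(3) by blast
next
  case (its_Un M)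
  then show ?case by blast
qed

lemma its_extreme:
  assumes "mono F" "X \<in> its F"
  shows "\<forall>Y\<in>its F. Y \<subset> X \<longrightarrow> F Y \<subseteq> X"
  using assms(2)
proof induct
  case (its_step X0)
  show ?case
  proof (intro ballI impI)
    fix Y assume Y: "Y \<in> its F" "Y \<subset> F X0"
    from its_extreme_cmp[OF assms(1) its_step(1) its_step(2) Y(1)]
    have "Y \<subseteq> X0 \<or> F X0 \<subseteq> Y" .
    then show "F Y \<subseteq> F X0" using Y(2) assms(1) by (auto simp: mono_def)
  qed
next
  case (its_Un M)
  show ?case
  proof (intro ballI impI)
    fix Y assume Y: "Y \<in> its F" "Y \<subset> \<Union>M"
    have cmp: "\<And>Z. Z \<in> M \<Longrightarrow> Y \<subseteq> Z \<or> F Z \<subseteq> Y"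
      using its_extreme_cmp[OF assms(1)] its_Un Y(1) by blast
    have "\<exists>Z\<in>M. Y \<subseteq> Z"
    proof (rule ccontr)
      assume "\<not> ?thesis"
      then have "\<And>Z. Z \<in> M \<Longrightarrow> Z \<subseteq> Y"
        using cmp its_le[OF assms(1)] its_Un(1) by blast
      then show False using Y(2) by blast
    qed
    then obtain Z where Z: "Z \<in> M" "Y \<subseteq> Z" by blast
    show "F Y \<subseteq> \<Union>M"
    proof (cases "Y = Z")
      case False
      then show ?thesis using Z its_Un Y(1) by blast
    next
      case True
      obtain Z' where Z': "Z' \<in> M" "\<not> Z' \<subseteq> Y" using Y(2) by blast
      have "Z' \<subseteq> Y \<or> F Y \<subseteq> Z'"
        using its_extreme_cmp[OF assms(1), of Y Z'] True Z its_Un Y(1) Z'(1) by blast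
      then show ?thesis using Z' by blast
    qed
  qed
qed

lemma its_cmp:
  assumes "mono F" "X \<in> its F" "Y \<in> its F"
  shows "Y \<subseteq> X \<or> F X \<subseteq> Y"
  using its_extreme_cmp[OF assms(1,2) its_extreme[OF assms(1,2)] assms(3)] .

lemma its_below:
  assumes "mono F" "F Z \<subseteq> Z" "X \<in> its F" shows "X \<subseteq> Z"
  using assms(3)
proof induct
  case (its_step X) then show ?case using assms(1,2) by (meson monoD order_trans)
next
  case (its_Un M) then show ?case by blast
qed

lemma its_fix: "F (\<Union>(its F)) \<subseteq> \<Union>(its F)"
proof -
  have "\<Union>(its F) \<in> its F" by (rule its_Un) simp
  then have "F (\<Union>(its F)) \<in> its F" by (rule its_step)
  then show ?thesis by blast
qed



definition enum_rec :: "'a::wellorder set \<Rightarrow> 'a \<Rightarrow> 'a" where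
  "enum_rec Y = wfrec {(x, y). x < y} (\<lambda>g b. LEAST y. y \<in> Y \<and> (\<forall>b'<b. g b' < y))"

lemma enum_rec_eq: "enum_rec Y b = (LEAST y. y \<in> Y \<and> (\<forall>b'<b. enum_rec Y b' < y))"
proof -
  have "wf {(x::'a, y). x < y}" using wf by (simp add: wf_def)
  then show ?thesis
    unfolding enum_rec_def
    by (subst wfrec) (simp_all add: cut_def)
qed

lemma enumeration:
  fixes Y :: "'a::wellorder set"
  assumes "Y \<subseteq> {..<k}"
  shows "\<exists>b\<le>k. \<exists>e. bij_betw e {..<b} Y"
proof -
  define e where "e = enum_rec Y"
  have e_eq: "\<And>b. e b = (LEAST y. y \<in> Y \<and> (\<forall>b'<b. e b' < y))"
    unfolding e_def by (rule enum_rec_eq)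
  define D where "D = {b. \<exists>y\<in>Y. \<forall>b'<b. e b' < y}"
  have inD: "\<And>b. b \<in> D \<Longrightarrow> e b \<in> Y \<and> (\<forall>b'<b. e b' < e b)"
  proof -
    fix b assume "b \<in> D"
    then have "\<exists>y. y \<in> Y \<and> (\<forall>b'<b. e b' < y)" unfolding D_def by blast
    from LeastI_ex[OF this] show "e b \<in> Y \<and> (\<forall>b'<b. e b' < e b)" by (subst (1 2) e_eq) 
  qed
  have Ddown: "\<And>b c. b \<in> D \<Longrightarrow> c < b \<Longrightarrow> c \<in> D"
    unfolding D_def using order.strict_trans by blast
  have ge: "\<And>b. b \<in> D \<Longrightarrow> b \<le> e b"
  proof -
    fix b show "b \<in> D \<Longrightarrow> b \<le> e b"
    proof (induction b rule: less_induct)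
      case (less b)
      show ?case
      proof (rule ccontr)
        assume "\<not> b \<le> e b"
        then have lt: "e b < b" by simp
        then have "e b \<in> D" using Ddown less.prems by blast
        then have "e b \<le> e (e b)" using less.IH lt by blast
        moreover have "e (e b) < e b" using inD[OF less.prems] lt by blast
        ultimately show False by simp
      qed
    qed
  qed
  have Dk: "D \<subseteq> {..<k}"
  proof
    fix b assume "b \<in> D"
    then have "b \<le> e b" "e b \<in> Y" using ge inD by auto
    then show "b \<in> {..<k}" using assms by fastforce
  qed
  define b0 where "b0 = (LEAST b. b \<notin> D)"
  have "k \<notin> D" using Dk by blast
  then have b0D: "b0 \<notin> D" unfolding b0_def by (rule LeastI)
  have b0k: "b0 \<le> k" unfolding b0_def using \<open>k \<notin> D\<close> by (rule Least_le)
  have Deq: "D = {..<b0}"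
  proof
    show "D \<subseteq> {..<b0}"
    proof
      fix b assume "b \<in> D"
      show "b \<in> {..<b0}"
      proof (rule ccontr)
        assume "b \<notin> {..<b0}"
        then have "b0 \<le> b" by simp
        then have "b0 = b \<or> b0 < b" by auto
        then show False using Ddown \<open>b \<in> D\<close> b0D by blast
      qed
    qed
    show "{..<b0} \<subseteq> D" unfolding b0_def using not_less_Least by fastforce
  qed
  have inj: "inj_on e D"
  proof (rule inj_onI)
    fix x y assume "x \<in> D" "y \<in> D" "e x = e y"
    then show "x = y" using inD by (metis less_irrefl linorder_neqE)
  qed
  have surj: "e ` D = Y"
  proof
    show "e ` D \<subseteq> Y" using inD by blast
    show "Y \<subseteq> e ` D"
    proof
      fix y assume y: "y \<in> Y"
      show "y \<in> e ` D"
      proof (rule ccontr)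
        assume ny: "y \<notin> e ` D"
        have all: "\<And>b. b \<in> D \<Longrightarrow> e b < y"
        proof -
          fix b show "b \<in> D \<Longrightarrow> e b < y"
          proof (induction b rule: less_induct)
            case (less b)
            have "\<forall>b'<b. e b' < y" using less Ddown by blast
            then have "e b \<le> y" using y by (subst e_eq) (rule Least_le, blast)
            moreover have "e b \<noteq> y" using ny less.prems by blast
            ultimately show ?case by simp
          qed
        qed
        have "b0 \<in> D" unfolding D_def using y all Deq by blast
        then show False using b0D by blast
      qed
    qed
  qed
  have "bij_betw e {..<b0} Y" using inj surj Deq by (simp add: bij_betw_def)
  then show ?thesis using b0k by blast
qed

lemma regC:
  fixes k :: "'a::wellorder"
  assumes regK0: "\<forall>b g. b < k \<longrightarrow> g ` {..<b} \<subseteq> {..<k} \<longrightarrow> (\<exists>j<k. g ` {..<b} \<subseteq> {..<j})"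
    and Y: "Y \<subseteq> {..<k}" "\<not> Y \<approx> {..<k}"
  shows "\<exists>j<k. Y \<subseteq> {..<j}"
proof -
  obtain b e where b: "b \<le> k" "bij_betw e {..<b} Y" using enumeration[OF Y(1)] by blast
  have "b \<noteq> k" using b(2) Y(2) eqpoll_def eqpoll_sym by blast
  then have "b < k" using b(1) by simp
  moreover have "e ` {..<b} = Y" using b(2) by (simp add: bij_betw_def)
  ultimately show ?thesis using regK0[rule_format, of b e] Y(1) by auto
qed

lemma regC_count:
  fixes k :: "'a::wellorder"
  assumes regK0: "\<forall>b g. b < k \<longrightarrow> g ` {..<b} \<subseteq> {..<k} \<longrightarrow> (\<exists>j<k. g ` {..<b} \<subseteq> {..<j})"
    and unc: "\<not> countable {..<k}"
    and Y: "Y \<subseteq> {..<k}" "countable Y"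
  shows "\<exists>j<k. Y \<subseteq> {..<j}"
proof (rule regC[OF regK0 Y(1)])
  show "\<not> Y \<approx> {..<k}" using countable_eqpoll[OF Y(2)] eqpoll_sym unc by blast
qed

lemma above:
  fixes k :: "'a::wellorder"
  assumes regK0: "\<forall>b g. b < k \<longrightarrow> g ` {..<b} \<subseteq> {..<k} \<longrightarrow> (\<exists>j<k. g ` {..<b} \<subseteq> {..<j})"
    and unc: "\<not> countable {..<k}" and "x < k"
  shows "\<exists>y<k. x < y"
  using regC_count[OF regK0 unc, of "{x}"] assms(3) by auto



lemma club_unb: "club k C \<Longrightarrow> b < k \<Longrightarrow> \<exists>c\<in>C. b < c \<and> c < k"
  unfolding club_def by blast

lemma fodor:
  fixes k :: "'a::wellorder"
  assumes regK0: "\<forall>b g. b < k \<longrightarrow> g ` {..<b} \<subseteq> {..<k} \<longrightarrow> (\<exists>j<k. g ` {..<b} \<subseteq> {..<j})"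
    and unc: "\<not> countable {..<k}"
    and st: "stationary k S" and reg: "\<forall>d\<in>S. h d < d"
  shows "\<exists>j. stationary k {d\<in>S. h d = j}"
proof (rule ccontr)
  assume "\<not> ?thesis"
  then have "\<forall>j. \<exists>C. club k C \<and> {d\<in>S. h d = j} \<inter> C = {}"
    using st unfolding stationary_def by blast
  then obtain Cf where Cf: "\<And>j. club k (Cf j)" "\<And>j. {d\<in>S. h d = j} \<inter> Cf j = {}" by metis
  define D where "D = {d. d < k \<and> (\<forall>j<d. d \<in> Cf j)}"
  have nxt: "\<And>x. x < k \<Longrightarrow> \<exists>y<k. x < y \<and> (\<forall>j<x. \<exists>c\<in>Cf j. x < c \<and> c < y)"
  proof -
    fix x assume x: "x < k"
    obtain c where c: "\<And>j. c j \<in> Cf j \<and> x < c j \<and> c j < k" using club_unb[OF Cf(1) x] by metis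
    obtain y1 where y1: "y1 < k" "c ` {..<x} \<subseteq> {..<y1}" using regK0[rule_format, OF x, of c] c by blast
    obtain y2 where y2: "y2 < k" "x < y2" using above[OF regK0 unc x] by blast
    show "\<exists>y<k. x < y \<and> (\<forall>j<x. \<exists>c\<in>Cf j. x < c \<and> c < y)"
      apply (rule exI[of _ "max y1 y2"])
      using y1 y2 c by (auto simp: less_max_iff_disj)
  qed
  obtain nx where nx: "\<And>x. x < k \<Longrightarrow> nx x < k \<and> x < nx x \<and> (\<forall>j<x. \<exists>c\<in>Cf j. x < c \<and> c < nx x)"
    using nxt by metis
  have clubD: "club k D"
    unfolding club_def
  proof (intro conjI allI impI)
    show "D \<subseteq> {..<k}" unfolding D_def by blast
  next
    fix d assume d: "d < k" "(\<exists>b. b < d) \<and> (\<forall>b<d. \<exists>c\<in>D. b < c \<and> c < d)"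
    have "\<forall>j<d. d \<in> Cf j"
    proof (intro allI impI)
      fix j assume j: "j < d"
      have "\<forall>b<d. \<exists>c\<in>Cf j. b < c \<and> c < d"
      proof (intro allI impI)
        fix b assume "b < d"
        then obtain c where c: "c \<in> D" "max b j < c" "c < d" using d j by (metis max_less_iff_conj)
        then have "c \<in> Cf j" unfolding D_def by auto
        then show "\<exists>c\<in>Cf j. b < c \<and> c < d" using c by auto
      qed
      then show "d \<in> Cf j" using Cf(1)[of j] d unfolding club_def by blast
    qed
    then show "d \<in> D" unfolding D_def using d by blast
  next
    fix b assume b: "b < k"
    define s where "s = rec_nat b (\<lambda>_ x. nx x)"
    have s0: "s 0 = b" and sS: "\<And>n. s (Suc n) = nx (s n)" unfolding s_def by simp_all
    have sk: "\<And>n. s n < k" by (induct_tac n) (simp_all add: s0 sS b nx)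
    have sinc: "\<And>n. s n < s (Suc n)" using sS nx sk by simp
    have smono: "strict_mono s" using sinc by (simp add: strict_mono_Suc_iff)
    obtain z where z: "z < k" "range s \<subseteq> {..<z}"
      using regC_count[OF regK0 unc, of "range s"] sk by blast
    define d where "d = (LEAST x. \<forall>n. s n < x)"
    have d1: "\<And>n. s n < d" unfolding d_def by (rule LeastI[of "\<lambda>x. \<forall>n. s n < x" z, rule_format]) (use z in auto)
    have dz: "d \<le> z" unfolding d_def by (rule Least_le) (use z in auto)
    have d2: "\<And>x. x < d \<Longrightarrow> \<exists>n. x < s n"
    proof -
      fix x assume "x < d"
      then have "\<not> (\<forall>n. s n < x)" unfolding d_def using not_less_Least by blast
      then obtain n where "x \<le> s n" by (auto simp: not_less)
      then show "\<exists>n. x < s n" using sinc order.strict_trans1 by blast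
    qed
    have dk: "d < k" using dz z by simp
    have "d \<in> D"
      unfolding D_def
    proof (intro CollectI conjI allI impI)
      show "d < k" by fact
      fix j assume j: "j < d"
      obtain n where n: "j < s n" using d2[OF j] by blast
      have "\<forall>x<d. \<exists>c\<in>Cf j. x < c \<and> c < d"
      proof (intro allI impI)
        fix x assume "x < d"
        then obtain m where m: "x < s m" using d2 by blast
        define m' where "m' = max m n"
        have "s m \<le> s m'" "s n \<le> s m'" using smono unfolding m'_def
          by (simp_all add: strict_mono_less_eq)
        then have xm: "x < s m'" "j < s m'" using m n by auto
        then obtain c where "c \<in> Cf j" "s m' < c" "c < nx (s m')" using nx sk by blast
        then show "\<exists>c\<in>Cf j. x < c \<and> c < d" using xm d1[of "Suc m'"] sS by (metis order.strict_trans)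
      qed
      moreover have "\<exists>b. b < d" using d1 by blast
      ultimately show "d \<in> Cf j" using Cf(1)[of j] dk unfolding club_def by blast
    qed
    moreover have "b < d" using d1[of 0] s0 by simp
    ultimately show "\<exists>c\<in>D. b < c" by blast
  qed
  then obtain d where d: "d \<in> S" "d \<in> D" using st unfolding stationary_def by blast
  then have "d \<in> Cf (h d)" using reg unfolding D_def by blast
  then show False using Cf(2)[of "h d"] d by blast
qed


lemma stat_unb:
  fixes k :: "'a::wellorder"
  assumes regK0: "\<forall>b g. b < k \<longrightarrow> g ` {..<b} \<subseteq> {..<k} \<longrightarrow> (\<exists>j<k. g ` {..<b} \<subseteq> {..<j})"
    and unc: "\<not> countable {..<k}"
    and st: "stationary k S" and j0: "j0 < k"
  shows "\<exists>d\<in>S. j0 < d"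
proof -
  have "club k {x. j0 < x \<and> x < k}"
    unfolding club_def
  proof (intro conjI allI impI)
    fix b assume "b < k"
    then have "max b j0 < k" using j0 by simp
    from above[OF regK0 unc this] obtain y where "y < k" "max b j0 < y" by blast
    then show "\<exists>c\<in>{x. j0 < x \<and> x < k}. b < c" by auto
  qed auto
  then show ?thesis using st unfolding stationary_def by blast
qed


lemma stat_ne:
  fixes k :: "'a::wellorder"
  assumes regK0: "\<forall>b g. b < k \<longrightarrow> g ` {..<b} \<subseteq> {..<k} \<longrightarrow> (\<exists>j<k. g ` {..<b} \<subseteq> {..<j})"
    and unc: "\<not> countable {..<k}"
    and st: "stationary k S"
  shows "\<exists>d. d \<in> S"
proof -
  have "club k {..<k}"
    unfolding club_def
  proof (intro conjI allI impI)
    fix b assume "b < k"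
    from above[OF regK0 unc this] show "\<exists>c\<in>{..<k}. b < c" by auto
  qed auto
  then show ?thesis using st unfolding stationary_def by blast
qed



fun play :: "('b list \<Rightarrow> 'a \<Rightarrow> 'b) \<Rightarrow> (nat \<Rightarrow> 'a) \<Rightarrow> 'b list \<Rightarrow> nat \<Rightarrow> 'b list" where
  "play g s \<eta> 0 = \<eta>"
| "play g s \<eta> (Suc k) = play g s (\<eta> @ [g \<eta> (s (length \<eta>))]) k"

lemma play_dep: "(\<forall>m<length \<eta> + k. s m = s' m) \<Longrightarrow> play g s \<eta> k = play g s' \<eta> k"
  by (induction k arbitrary: \<eta>) auto

lemma play_len: "length (play g s \<eta> k) = length \<eta> + k"
  by (induction k arbitrary: \<eta>) auto

lemma play_entries:
  assumes "\<And>p. g p (s (length p)) < s (length p)"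
  shows "(\<forall>m<length \<eta>. \<eta>!m < s m) \<Longrightarrow> (\<forall>m<length (play g s \<eta> k). play g s \<eta> k ! m < s m)"
proof (induction k arbitrary: \<eta>)
  case 0 then show ?case by simp
next
  case (Suc k)
  have "\<forall>m<length (\<eta> @ [g \<eta> (s (length \<eta>))]). (\<eta> @ [g \<eta> (s (length \<eta>))]) ! m < s m"
    using Suc.prems assms by (auto simp: nth_append less_Suc_eq)
  then show ?case using Suc.IH by simp
qed

lemma seq_vals_countable: "countable (seq_vals \<nu>)"
  by (cases \<nu>) (auto intro: countable_finite)

definition omg :: "nat \<Rightarrow> 'a::wellorder" where
  "omg = rec_nat (LEAST x. True) (\<lambda>_ x. LEAST y. x < y)"

lemma limit_omega:
  fixes d :: "'a::wellorder"
  assumes "is_limit d"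
  shows "omg n < d \<and> omg n < (omg (Suc n) :: 'a)"
  unfolding omg_def
proof (induction n)
  case 0
  obtain b where "b < d" using assms unfolding is_limit_def by blast
  moreover have "(LEAST x::'a. True) \<le> b" by (rule Least_le) simp
  ultimately have l: "(LEAST x::'a. True) < d" by simp
  then obtain c where "c < d" "(LEAST x::'a. True) < c" using assms unfolding is_limit_def by blast
  then have "(LEAST x::'a. True) < (LEAST y. (LEAST x::'a. True) < y)" by (metis LeastI)
  then show ?case using l by simp
next
  case (Suc n)
  let ?e = "rec_nat (LEAST x::'a. True) (\<lambda>_ x. LEAST y. x < y)"
  have "?e n < d" using Suc by simp
  then obtain c where c: "c < d" "?e n < c" using assms unfolding is_limit_def by blast
  have "?e (Suc n) \<le> c" using c by (simp add: Least_le)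
  then have s1: "?e (Suc n) < d" using c by simp
  then obtain c' where "c' < d" "?e (Suc n) < c'" using assms unfolding is_limit_def by blast
  moreover have "?e (Suc (Suc n)) = (LEAST y. ?e (Suc n) < y)" by simp
  ultimately have "?e (Suc n) < ?e (Suc (Suc n))" using LeastI[of "\<lambda>y. ?e (Suc n) < y" c'] by simp
  then show ?case using s1 by simp
qed


theorem claim1p17:
  fixes lam :: "'a::wellorder" and kap :: 'a
    and f :: "'a list \<Rightarrow> 'a omseq set"
    and lami :: "'a \<Rightarrow> 'a" and lamin :: "'a \<Rightarrow> nat \<Rightarrow> 'a"
    and S :: "'a set" and I :: "nat \<Rightarrow> 'a \<Rightarrow> 'a set set"
  assumes sing: "singular_cardinal lam" and kap_def: "kap = cf lam"
    and kap_unc: "\<not> countable {..<kap}"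
    and f_ok: "\<forall>\<eta>. set \<eta> \<subseteq> {..<lam} \<longrightarrow>
                 (\<forall>\<nu>\<in>f \<eta>. seq_vals \<nu> \<subseteq> {..<lam}) \<and> f \<eta> \<prec> {..<kap}"
    and lami_card: "\<forall>i<kap. is_cardinal (lami i)"
    and lami_below: "\<forall>i<kap. lami i < lam"
    and lami_sup: "\<forall>b<lam. \<exists>i<kap. b < lami i"
    and lami_incr: "\<forall>i j. i < j \<and> j < kap \<longrightarrow> lami i < lami j"
    and lami_cont: "\<forall>d<kap. is_limit d \<longrightarrow> (\<forall>b<lami d. \<exists>j<d. b < lami j)"
    and S_sub: "S \<subseteq> {i. i < kap \<and> cf_omega i}"
    and S_stat: "stationary kap S"
    and lamin_sup: "\<forall>i\<in>S. (\<forall>n. lamin i n < lami i) \<and> (\<forall>b<lami i. \<exists>n. b < lamin i n)"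
    and lamin_0: "\<forall>i\<in>S. kap < lamin i 0"
    and lamin_reg: "\<forall>i\<in>S. \<forall>n. regular_cardinal (lamin i n)"
    and lamin_incr: "\<forall>i\<in>S. \<forall>n. lamin i n < lamin i (Suc n)"
    and I_ideal: "\<forall>\<mu> n. regular_cardinal \<mu> \<and> \<mu> < lam \<longrightarrow>
                    ideal_on {..<\<mu>} (I n \<mu>) \<and> succ_complete kap (I n \<mu>)
                    \<and> (\<forall>A. A \<subseteq> {..<\<mu>} \<and> (\<exists>b<\<mu>. A \<subseteq> {..<b}) \<longrightarrow> A \<in> I n \<mu>)"
    and coh: "\<forall>i1\<in>S. \<forall>i2\<in>S. \<forall>n.
                {j. j < kap \<and> lami j < lamin i1 n} = {j. j < kap \<and> lami j < lamin i2 n}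
                \<longrightarrow> lamin i1 n = lamin i2 n"
  shows "\<exists>C. club kap C \<and> (\<forall>i\<in>C \<inter> S. \<exists>T :: 'a list set.
            (\<forall>\<eta>\<in>T. \<forall>m<length \<eta>. \<eta> ! m < lamin i m)
          \<and> [] \<in> T
          \<and> (\<forall>\<eta>\<in>T. \<forall>k\<le>length \<eta>. take k \<eta> \<in> T)
          \<and> (\<forall>\<eta>\<in>T. {\<alpha>. \<alpha> < lamin i (length \<eta>) \<and> \<eta> @ [\<alpha>] \<in> T}
                      \<notin> I (length \<eta>) (lamin i (length \<eta>)))
          \<and> (\<forall>\<eta>\<in>T. \<forall>\<nu>\<in>f \<eta>. seq_vals \<nu> \<subseteq> {..<lami i}))"
proof -
  have regK: "\<And>b g. b < kap \<Longrightarrow> g ` {..<b} \<subseteq> {..<kap} \<Longrightarrow> \<exists>j<kap. g ` {..<b} \<subseteq> {..<j}"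
  proof (rule ccontr)
    fix b g assume b: "b < kap" and g: "g ` {..<b} \<subseteq> {..<kap}"
      and nb: "\<not> (\<exists>j<kap. g ` {..<b} \<subseteq> {..<j})"
    have "cofinal_map b lam (lami \<circ> g)"
      unfolding cofinal_map_def
    proof (intro conjI allI impI)
      show "(lami \<circ> g) ` {..<b} \<subseteq> {..<lam}" using g lami_below by auto
      fix c assume "c < lam"
      then obtain j where j: "j < kap" "c < lami j" using lami_sup by blast
      then obtain d where d: "d < b" "\<not> g d < j" using nb by auto
      then have "j \<le> g d" by simp
      moreover have "g d < kap" using g d by auto
      ultimately have "lami j \<le> lami (g d)" using lami_incr by (metis order_le_less)
      then show "\<exists>d<b. c \<le> (lami \<circ> g) d" using d j by auto
    qed
    then have "cf lam \<le> b" unfolding cf_def by (metis (mono_tags, lifting) Least_le)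
    then show False using b kap_def by simp
  qed
  have regK0: "\<forall>b g. b < kap \<longrightarrow> g ` {..<b} \<subseteq> {..<kap} \<longrightarrow> (\<exists>j<kap. g ` {..<b} \<subseteq> {..<j})"
    using regK by blast
  have Slim: "\<And>i. i \<in> S \<Longrightarrow> i < kap \<and> is_limit i"
  proof -
    fix i assume "i \<in> S"
    then have "i < kap" "cf_omega i" using S_sub by auto
    then obtain s :: "nat \<Rightarrow> 'a" where s: "\<forall>n. s n < i" "\<forall>b<i. \<exists>n. b < s n"
      unfolding cf_omega_def by blast
    have "is_limit i" unfolding is_limit_def
    proof (intro conjI allI impI)
      show "\<exists>b. b < i" using s(1) by blast
      fix b assume "b < i"
      then obtain n where "b < s n" using s(2) by blast
      then show "\<exists>c<i. b < c" using s(1) by blast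
    qed
    then show "i < kap \<and> is_limit i" using \<open>i < kap\<close> by blast
  qed
  have lamin_lam: "\<And>i n. i \<in> S \<Longrightarrow> lamin i n < lam"
  proof -
    fix i n assume i: "i \<in> S"
    have "lamin i n < lami i" using lamin_sup i by blast
    moreover have "lami i < lam" using lami_below Slim[OF i] by blast
    ultimately show "lamin i n < lam" by (rule less_trans)
  qed
  have Ipr: "\<And>i n m. i \<in> S \<Longrightarrow> ideal_on {..<lamin i n} (I m (lamin i n)) \<and> succ_complete kap (I m (lamin i n))"
  proof -
    fix i n m assume i: "i \<in> S"
    have "regular_cardinal (lamin i n) \<and> lamin i n < lam" using lamin_reg lamin_lam i by blast
    then show "ideal_on {..<lamin i n} (I m (lamin i n)) \<and> succ_complete kap (I m (lamin i n))"
      using I_ideal by simp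
  qed
  define fc :: "'a \<Rightarrow> 'a list \<Rightarrow> bool" where "fc \<delta> \<eta> \<longleftrightarrow> (\<forall>m<length \<eta>. \<eta>!m < lamin \<delta> m) \<and> (\<forall>\<nu>\<in>f \<eta>. seq_vals \<nu> \<subseteq> {..<lami \<delta>})" for \<delta> \<eta>
  define Phi :: "'a \<Rightarrow> 'a list set \<Rightarrow> 'a list set" where "Phi \<delta> X = {\<eta>. \<not> fc \<delta> \<eta> \<or> {\<alpha>. \<alpha> < lamin \<delta> (length \<eta>) \<and> \<eta>@[\<alpha>] \<notin> X} \<in> I (length \<eta>) (lamin \<delta> (length \<eta>))}" for \<delta> X
  define L :: "'a \<Rightarrow> 'a list set" where "L \<delta> = \<Union>(its (Phi \<delta>))" for \<delta>
  define Yr :: "'a \<Rightarrow> 'a list \<Rightarrow> 'a list set" where "Yr \<delta> \<eta> = \<Union>{X \<in> its (Phi \<delta>). \<eta> \<notin> X}" for \<delta> \<eta>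
  define A :: "'a \<Rightarrow> 'a list \<Rightarrow> 'a set" where "A \<delta> \<eta> = {\<alpha>. \<alpha> < lamin \<delta> (length \<eta>) \<and> \<eta>@[\<alpha>] \<notin> Yr \<delta> \<eta>}" for \<delta> \<eta>
  define U :: "'a list \<Rightarrow> 'a \<Rightarrow> 'a set" where "U \<eta> \<mu> = \<Union>((\<lambda>\<delta>. A \<delta> \<eta>) ` {\<delta>\<in>S. lamin \<delta> (length \<eta>) = \<mu> \<and> \<eta> \<in> L \<delta> \<and> fc \<delta> \<eta>})" for \<eta> \<mu>
  define gen :: "'a list \<Rightarrow> 'a \<Rightarrow> 'a" where "gen \<eta> \<mu> = (SOME \<alpha>. \<alpha> < \<mu> \<and> \<alpha> \<notin> U \<eta> \<mu>)" for \<eta> \<mu>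
  have mono: "\<And>\<delta>. \<delta> \<in> S \<Longrightarrow> mono (Phi \<delta>)"
  proof (rule monoI)
    fix \<delta> and X X' :: "'a list set" assume d: "\<delta> \<in> S" and XX: "X \<subseteq> X'"
    show "Phi \<delta> X \<subseteq> Phi \<delta> X'"
    proof
      fix \<eta> assume "\<eta> \<in> Phi \<delta> X"
      then have h: "\<not> fc \<delta> \<eta> \<or> {\<alpha>. \<alpha> < lamin \<delta> (length \<eta>) \<and> \<eta>@[\<alpha>] \<notin> X} \<in> I (length \<eta>) (lamin \<delta> (length \<eta>))"
        unfolding Phi_def by blast
      have sub: "{\<alpha>. \<alpha> < lamin \<delta> (length \<eta>) \<and> \<eta>@[\<alpha>] \<notin> X'} \<subseteq> {\<alpha>. \<alpha> < lamin \<delta> (length \<eta>) \<and> \<eta>@[\<alpha>] \<notin> X}"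
        using XX by blast
      have "ideal_on {..<lamin \<delta> (length \<eta>)} (I (length \<eta>) (lamin \<delta> (length \<eta>)))" using Ipr d by blast
      then have "\<forall>A\<in>I (length \<eta>) (lamin \<delta> (length \<eta>)). \<forall>B. B \<subseteq> A \<longrightarrow> B \<in> I (length \<eta>) (lamin \<delta> (length \<eta>))"
        unfolding ideal_on_def by blast
      then show "\<eta> \<in> Phi \<delta> X'" using h sub unfolding Phi_def by blast
    qed
  qed
  have Yr_its: "\<And>\<delta> \<eta>. Yr \<delta> \<eta> \<in> its (Phi \<delta>)"
    unfolding Yr_def by (rule its_Un) blast
  have notYr: "\<And>\<delta> \<eta>. \<eta> \<notin> Yr \<delta> \<eta>" unfolding Yr_def by blast
  have L_fix: "\<And>\<delta>. Phi \<delta> (L \<delta>) \<subseteq> L \<delta>" unfolding L_def by (rule its_fix)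
  have Yr_step: "\<And>\<delta> \<eta>. \<delta> \<in> S \<Longrightarrow> \<eta> \<in> L \<delta> \<Longrightarrow> \<eta> \<in> Phi \<delta> (Yr \<delta> \<eta>)"
  proof (rule ccontr)
    fix \<delta> :: 'a and \<eta> :: "'a list" assume d: "\<delta> \<in> S" and eL: "\<eta> \<in> L \<delta>" and ne: "\<eta> \<notin> Phi \<delta> (Yr \<delta> \<eta>)"
    have "Phi \<delta> (Yr \<delta> \<eta>) \<in> its (Phi \<delta>)" using Yr_its by (rule its_step)
    then have "Phi \<delta> (Yr \<delta> \<eta>) \<subseteq> Yr \<delta> \<eta>" using ne unfolding Yr_def by blast
    then have "L \<delta> \<subseteq> Yr \<delta> \<eta>" unfolding L_def using its_below[OF mono[OF d]] by blast
    then show False using eL notYr by blast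
  qed
  have A_I: "\<And>\<delta> \<eta>. \<delta> \<in> S \<Longrightarrow> \<eta> \<in> L \<delta> \<Longrightarrow> fc \<delta> \<eta> \<Longrightarrow> A \<delta> \<eta> \<in> I (length \<eta>) (lamin \<delta> (length \<eta>))"
  proof -
    fix \<delta> \<eta> assume "\<delta> \<in> S" "\<eta> \<in> L \<delta>" "fc \<delta> \<eta>"
    then have "\<eta> \<in> Phi \<delta> (Yr \<delta> \<eta>)" using Yr_step by blast
    then show "A \<delta> \<eta> \<in> I (length \<eta>) (lamin \<delta> (length \<eta>))"
      using \<open>fc \<delta> \<eta>\<close> unfolding A_def Phi_def by simp
  qed
  have U_I: "\<And>\<delta> \<eta>. \<delta> \<in> S \<Longrightarrow> U \<eta> (lamin \<delta> (length \<eta>)) \<in> I (length \<eta>) (lamin \<delta> (length \<eta>))"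
  proof -
    fix \<delta> :: 'a and \<eta> :: "'a list" assume d: "\<delta> \<in> S"
    let ?\<mu> = "lamin \<delta> (length \<eta>)"
    let ?D = "{\<delta>'\<in>S. lamin \<delta>' (length \<eta>) = ?\<mu> \<and> \<eta> \<in> L \<delta>' \<and> fc \<delta>' \<eta>}"
    have "(\<lambda>\<delta>'. A \<delta>' \<eta>) ` ?D \<subseteq> I (length \<eta>) ?\<mu>"
    proof
      fix Z assume "Z \<in> (\<lambda>\<delta>'. A \<delta>' \<eta>) ` ?D"
      then obtain \<delta>' where "\<delta>' \<in> ?D" "Z = A \<delta>' \<eta>" by blast
      then show "Z \<in> I (length \<eta>) ?\<mu>" using A_I[of \<delta>' \<eta>] by simp
    qed
    moreover have "(\<lambda>\<delta>'. A \<delta>' \<eta>) ` ?D \<lesssim> {..<kap}"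
    proof -
      have "?D \<subseteq> {..<kap}" using S_sub by auto
      then show ?thesis using lepoll_trans[OF image_lepoll subset_imp_lepoll] by blast
    qed
    moreover have "succ_complete kap (I (length \<eta>) ?\<mu>)" using Ipr d by blast
    ultimately show "U \<eta> ?\<mu> \<in> I (length \<eta>) ?\<mu>" unfolding U_def succ_complete_def by (simp only:)
  qed
  have gen_ok: "\<And>\<delta> \<eta>. \<delta> \<in> S \<Longrightarrow> gen \<eta> (lamin \<delta> (length \<eta>)) < lamin \<delta> (length \<eta>) \<and> gen \<eta> (lamin \<delta> (length \<eta>)) \<notin> U \<eta> (lamin \<delta> (length \<eta>))"
  proof -
    fix \<delta> :: 'a and \<eta> :: "'a list" assume d: "\<delta> \<in> S"
    let ?\<mu> = "lamin \<delta> (length \<eta>)"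
    have ex: "\<exists>\<alpha>. \<alpha> < ?\<mu> \<and> \<alpha> \<notin> U \<eta> ?\<mu>"
    proof (rule ccontr)
      assume "\<not> ?thesis"
      then have "{..<?\<mu>} \<subseteq> U \<eta> ?\<mu>" by auto
      moreover have "U \<eta> ?\<mu> \<in> I (length \<eta>) ?\<mu>" using U_I d by blast
      moreover have "ideal_on {..<?\<mu>} (I (length \<eta>) ?\<mu>)" using Ipr d by blast
      ultimately show False unfolding ideal_on_def by blast
    qed
    show "gen \<eta> ?\<mu> < ?\<mu> \<and> gen \<eta> ?\<mu> \<notin> U \<eta> ?\<mu>"
      unfolding gen_def by (rule someI_ex[OF ex])
  qed
  have main: "\<And>\<delta> X \<eta>. \<delta> \<in> S \<Longrightarrow> X \<in> its (Phi \<delta>) \<Longrightarrow> \<eta> \<in> X \<Longrightarrow> \<exists>k. \<not> fc \<delta> (play gen (lamin \<delta>) \<eta> k)"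
  proof -
    fix \<delta> :: 'a and X :: "'a list set" and \<eta> :: "'a list" assume d: "\<delta> \<in> S" and X: "X \<in> its (Phi \<delta>)" and eX: "\<eta> \<in> X"
    from X eX show "\<exists>k. \<not> fc \<delta> (play gen (lamin \<delta>) \<eta> k)"
    proof (induction X arbitrary: \<eta> rule: its.induct)
      case (its_step X0 \<eta>)
      show ?case
      proof (cases "\<eta> \<in> X0")
        case True then show ?thesis using its_step.IH by blast
      next
        case False
        have "Yr \<delta> \<eta> \<subseteq> X0 \<or> Phi \<delta> X0 \<subseteq> Yr \<delta> \<eta>"
          using its_cmp[OF mono[OF d] its_step.hyps Yr_its] .
        then have YX: "Yr \<delta> \<eta> \<subseteq> X0" using its_step.prems notYr by blast
        show ?thesis
        proof (cases "fc \<delta> \<eta>")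
          case False
          then have "\<not> fc \<delta> (play gen (lamin \<delta>) \<eta> 0)" by simp
          then show ?thesis by blast
        next
          case True
          have "Phi \<delta> X0 \<in> its (Phi \<delta>)" using its_step.hyps by (rule its.its_step)
          then have eL: "\<eta> \<in> L \<delta>" unfolding L_def using its_step.prems by blast
          let ?a = "gen \<eta> (lamin \<delta> (length \<eta>))"
          have a: "?a < lamin \<delta> (length \<eta>)" "?a \<notin> U \<eta> (lamin \<delta> (length \<eta>))" using gen_ok d by auto
          have "A \<delta> \<eta> \<subseteq> U \<eta> (lamin \<delta> (length \<eta>))" unfolding U_def using d eL True by blast
          then have "?a \<notin> A \<delta> \<eta>" using a by blast
          then have "\<eta> @ [?a] \<in> Yr \<delta> \<eta>" using a unfolding A_def by blast
          then have "\<eta> @ [?a] \<in> X0" using YX by blast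
          then obtain k where "\<not> fc \<delta> (play gen (lamin \<delta>) (\<eta> @ [?a]) k)" using its_step.IH by blast
          then have "\<not> fc \<delta> (play gen (lamin \<delta>) \<eta> (Suc k))" by simp
          then show ?thesis by blast
        qed
      qed
    next
      case (its_Un M \<eta>)
      then show ?case by blast
    qed
  qed
  have play_ent: "\<And>\<delta> k. \<delta> \<in> S \<Longrightarrow> \<forall>m<length (play gen (lamin \<delta>) [] k). play gen (lamin \<delta>) [] k ! m < lamin \<delta> m"
  proof -
    fix \<delta> k assume d: "\<delta> \<in> S"
    show "\<forall>m<length (play gen (lamin \<delta>) [] k). play gen (lamin \<delta>) [] k ! m < lamin \<delta> m"
      by (rule play_entries) (use gen_ok d in auto)
  qed
  define B where "B = {\<delta>\<in>S. [] \<in> L \<delta>}"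
  show ?thesis
  proof (cases "stationary kap B")
    case False
    have "B \<subseteq> {..<kap}" unfolding B_def using S_sub by auto
    then obtain C where C: "club kap C" "B \<inter> C = {}" using False unfolding stationary_def by blast
    show ?thesis
    proof (rule exI[of _ C], rule conjI[OF C(1)], rule ballI)
      fix i assume iCS: "i \<in> C \<inter> S"
      then have nL: "[] \<notin> L i" using C(2) unfolding B_def by blast
      define T where "T = {\<eta>. \<forall>k\<le>length \<eta>. take k \<eta> \<notin> L i}"
      have TnL: "\<And>\<eta>. \<eta> \<in> T \<Longrightarrow> \<eta> \<notin> L i"
      proof -
        fix \<eta> assume "\<eta> \<in> T"
        then have "take (length \<eta>) \<eta> \<notin> L i" unfolding T_def by blast
        then show "\<eta> \<notin> L i" by simp
      qed
      have TPhi: "\<And>\<eta>. \<eta> \<in> T \<Longrightarrow> fc i \<eta> \<and> {\<alpha>. \<alpha> < lamin i (length \<eta>) \<and> \<eta>@[\<alpha>] \<notin> L i} \<notin> I (length \<eta>) (lamin i (length \<eta>))"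
      proof -
        fix \<eta> assume "\<eta> \<in> T"
        then have "\<eta> \<notin> Phi i (L i)" using TnL L_fix by blast
        then show "fc i \<eta> \<and> {\<alpha>. \<alpha> < lamin i (length \<eta>) \<and> \<eta>@[\<alpha>] \<notin> L i} \<notin> I (length \<eta>) (lamin i (length \<eta>))"
          unfolding Phi_def by simp
      qed
      have succ: "\<And>\<eta>. \<eta> \<in> T \<Longrightarrow> {\<alpha>. \<alpha> < lamin i (length \<eta>) \<and> \<eta> @ [\<alpha>] \<in> T} = {\<alpha>. \<alpha> < lamin i (length \<eta>) \<and> \<eta>@[\<alpha>] \<notin> L i}"
      proof -
        fix \<eta> assume eT: "\<eta> \<in> T"
        have "\<And>\<alpha>. \<eta> @ [\<alpha>] \<in> T \<longleftrightarrow> \<eta>@[\<alpha>] \<notin> L i"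
        proof
          fix \<alpha> assume "\<eta> @ [\<alpha>] \<in> T" then show "\<eta>@[\<alpha>] \<notin> L i" by (rule TnL)
        next
          fix \<alpha> assume a: "\<eta>@[\<alpha>] \<notin> L i"
          show "\<eta> @ [\<alpha>] \<in> T" unfolding T_def
          proof (intro CollectI allI impI)
            fix k assume "k \<le> length (\<eta> @ [\<alpha>])"
            then have "k \<le> length \<eta> \<or> k = Suc (length \<eta>)" by auto
            then show "take k (\<eta> @ [\<alpha>]) \<notin> L i"
            proof
              assume "k \<le> length \<eta>"
              then show ?thesis using eT unfolding T_def by simp
            next
              assume "k = Suc (length \<eta>)"
              then show ?thesis using a by simp
            qed
          qed
        qed
        then show "{\<alpha>. \<alpha> < lamin i (length \<eta>) \<and> \<eta> @ [\<alpha>] \<in> T} = {\<alpha>. \<alpha> < lamin i (length \<eta>) \<and> \<eta>@[\<alpha>] \<notin> L i}"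
          by blast
      qed
      show "\<exists>T :: 'a list set.
            (\<forall>\<eta>\<in>T. \<forall>m<length \<eta>. \<eta> ! m < lamin i m)
          \<and> [] \<in> T
          \<and> (\<forall>\<eta>\<in>T. \<forall>k\<le>length \<eta>. take k \<eta> \<in> T)
          \<and> (\<forall>\<eta>\<in>T. {\<alpha>. \<alpha> < lamin i (length \<eta>) \<and> \<eta> @ [\<alpha>] \<in> T}
                      \<notin> I (length \<eta>) (lamin i (length \<eta>)))
          \<and> (\<forall>\<eta>\<in>T. \<forall>\<nu>\<in>f \<eta>. seq_vals \<nu> \<subseteq> {..<lami i})"
      proof -
        have c1: "\<forall>\<eta>\<in>T. \<forall>m<length \<eta>. \<eta> ! m < lamin i m"
        proof
          fix \<eta> assume "\<eta> \<in> T"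
          then have "fc i \<eta>" using TPhi by blast
          then show "\<forall>m<length \<eta>. \<eta> ! m < lamin i m" unfolding fc_def by blast
        qed
        have c2: "[] \<in> T" unfolding T_def using nL by simp
        have c3: "\<forall>\<eta>\<in>T. \<forall>k\<le>length \<eta>. take k \<eta> \<in> T" unfolding T_def by (simp add: min_def)
        have c4: "\<forall>\<eta>\<in>T. {\<alpha>. \<alpha> < lamin i (length \<eta>) \<and> \<eta> @ [\<alpha>] \<in> T} \<notin> I (length \<eta>) (lamin i (length \<eta>))"
        proof
          fix \<eta> assume "\<eta> \<in> T"
          then show "{\<alpha>. \<alpha> < lamin i (length \<eta>) \<and> \<eta> @ [\<alpha>] \<in> T} \<notin> I (length \<eta>) (lamin i (length \<eta>))"
            using succ[of \<eta>] TPhi[of \<eta>] by simp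
        qed
        have c5: "\<forall>\<eta>\<in>T. \<forall>\<nu>\<in>f \<eta>. seq_vals \<nu> \<subseteq> {..<lami i}"
        proof (intro ballI)
          fix \<eta> \<nu> assume "\<eta> \<in> T" "\<nu> \<in> f \<eta>"
          then have "fc i \<eta>" using TPhi by blast
          then show "seq_vals \<nu> \<subseteq> {..<lami i}" unfolding fc_def using \<open>\<nu> \<in> f \<eta>\<close> by blast
        qed
        show ?thesis by (rule exI[of _ T]) (intro conjI c1 c2 c3 c4 c5)
      qed
    qed
  next
    case True
    have BS: "B \<subseteq> S" unfolding B_def by blast
    define kk where "kk \<delta> = (LEAST k. \<not> fc \<delta> (play gen (lamin \<delta>) [] k))" for \<delta>
    have kk: "\<And>\<delta>. \<delta> \<in> B \<Longrightarrow> \<not> fc \<delta> (play gen (lamin \<delta>) [] (kk \<delta>))"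
    proof -
      fix \<delta> assume d: "\<delta> \<in> B"
      then have "[] \<in> L \<delta>" "\<delta> \<in> S" unfolding B_def by auto
      then obtain X where "X \<in> its (Phi \<delta>)" "[] \<in> X" unfolding L_def by blast
      then have "\<exists>k. \<not> fc \<delta> (play gen (lamin \<delta>) [] k)" using main \<open>\<delta> \<in> S\<close> by blast
      then show "\<not> fc \<delta> (play gen (lamin \<delta>) [] (kk \<delta>))" unfolding kk_def by (rule LeastI_ex)
    qed
    have unc: "\<not> countable {..<kap}" by (rule kap_unc)
    have omg_reg: "\<forall>\<delta>\<in>B. (omg \<circ> kk) \<delta> < \<delta>"
      using BS Slim limit_omega by auto
    obtain J :: 'a where J: "stationary kap {\<delta>\<in>B. (omg \<circ> kk) \<delta> = J}"
      using fodor[where k=kap, OF regK0 unc True omg_reg] by blast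
    define B0 where "B0 = {\<delta>\<in>B. (omg \<circ> kk) \<delta> = J}"
    have B0st: "stationary kap B0" using J unfolding B0_def by simp
    obtain \<delta>0 where d0: "\<delta>0 \<in> B0" using stat_ne[where k=kap, OF regK0 unc B0st] by blast
    define K where "K = kk \<delta>0"
    have omg_inj: "inj (omg :: nat \<Rightarrow> 'a)"
    proof -
      have "is_limit \<delta>0" using d0 BS Slim unfolding B0_def by blast
      then have "strict_mono (omg :: nat \<Rightarrow> 'a)" using limit_omega[of \<delta>0] by (simp add: strict_mono_Suc_iff)
      then show ?thesis by (rule strict_mono_imp_inj_on)
    qed
    have kK: "\<And>\<delta>. \<delta> \<in> B0 \<Longrightarrow> kk \<delta> = K"
    proof -
      fix \<delta> assume "\<delta> \<in> B0"
      then have "(omg (kk \<delta>) :: 'a) = omg (kk \<delta>0)" using d0 unfolding B0_def by simp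
      then show "kk \<delta> = K" using omg_inj unfolding K_def by (simp add: inj_eq)
    qed
    define hm where "hm m \<delta> = (LEAST j. lamin \<delta> m \<le> lami j)" for m \<delta>
    have hm_lt: "\<And>m \<delta>. \<delta> \<in> S \<Longrightarrow> hm m \<delta> < \<delta>"
    proof -
      fix m \<delta> assume d: "\<delta> \<in> S"
      have "lamin \<delta> m < lami \<delta>" using lamin_sup d by blast
      then obtain j where j: "j < \<delta>" "lamin \<delta> m < lami j" using lami_cont Slim[OF d] by blast
      then have "hm m \<delta> \<le> j" unfolding hm_def by (simp add: Least_le)
      then show "hm m \<delta> < \<delta>" using j by simp
    qed
    have hm_set: "\<And>m \<delta>. \<delta> \<in> S \<Longrightarrow> {j. j < kap \<and> lami j < lamin \<delta> m} = {j. j < kap \<and> j < hm m \<delta>}"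
    proof -
      fix m \<delta> assume d: "\<delta> \<in> S"
      have hk: "hm m \<delta> < kap" using hm_lt[OF d, of m] Slim[OF d] by (meson less_trans)
      have hle: "lamin \<delta> m \<le> lami (hm m \<delta>)"
      proof -
        have "lamin \<delta> m < lami \<delta>" using lamin_sup d by blast
        then obtain j where j: "j < \<delta>" "lamin \<delta> m < lami j" using lami_cont Slim[OF d] by blast
        then show ?thesis unfolding hm_def by (metis (mono_tags, lifting) LeastI order_less_imp_le)
      qed
      show "{j. j < kap \<and> lami j < lamin \<delta> m} = {j. j < kap \<and> j < hm m \<delta>}"
      proof (intro Collect_cong iffI conjI)
        fix j assume "j < kap \<and> lami j < lamin \<delta> m"
        then have jj: "j < kap" "lami j < lamin \<delta> m" by auto
        show "j < kap" by fact
        show "j < hm m \<delta>"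
        proof (rule ccontr)
          assume "\<not> j < hm m \<delta>"
          then have "hm m \<delta> = j \<or> hm m \<delta> < j" by auto
          then have "lami (hm m \<delta>) \<le> lami j" using lami_incr jj(1) by (metis order.refl order_less_imp_le)
          then show False using hle jj(2) by simp
        qed
      next
        fix j assume "j < kap \<and> j < hm m \<delta>"
        then have "\<not> lamin \<delta> m \<le> lami j" unfolding hm_def using not_less_Least by blast
        then show "lami j < lamin \<delta> m" by simp
      qed (auto)
    qed
    have hm_eq: "\<And>m \<delta>1 \<delta>2. \<delta>1 \<in> S \<Longrightarrow> \<delta>2 \<in> S \<Longrightarrow> hm m \<delta>1 = hm m \<delta>2 \<Longrightarrow> lamin \<delta>1 m = lamin \<delta>2 m"
    proof -
      fix m \<delta>1 \<delta>2 assume "\<delta>1 \<in> S" "\<delta>2 \<in> S" "hm m \<delta>1 = hm m \<delta>2"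
      then have "{j. j < kap \<and> lami j < lamin \<delta>1 m} = {j. j < kap \<and> lami j < lamin \<delta>2 m}"
        using hm_set by simp
      then show "lamin \<delta>1 m = lamin \<delta>2 m" using coh \<open>\<delta>1 \<in> S\<close> \<open>\<delta>2 \<in> S\<close> by blast
    qed
    have iter: "\<And>m. \<exists>B'. B' \<subseteq> B0 \<and> stationary kap B' \<and> (\<forall>m'<m. \<forall>\<delta>1\<in>B'. \<forall>\<delta>2\<in>B'. hm m' \<delta>1 = hm m' \<delta>2)"
    proof -
      fix m show "\<exists>B'. B' \<subseteq> B0 \<and> stationary kap B' \<and> (\<forall>m'<m. \<forall>\<delta>1\<in>B'. \<forall>\<delta>2\<in>B'. hm m' \<delta>1 = hm m' \<delta>2)"
      proof (induction m)
        case 0 then show ?case using B0st by blast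
      next
        case (Suc m)
        then obtain B' where B': "B' \<subseteq> B0" "stationary kap B'" "\<forall>m'<m. \<forall>\<delta>1\<in>B'. \<forall>\<delta>2\<in>B'. hm m' \<delta>1 = hm m' \<delta>2"
          by blast
        have hr: "\<forall>\<delta>\<in>B'. hm m \<delta> < \<delta>"
        proof
          fix \<delta> assume "\<delta> \<in> B'"
          then have "\<delta> \<in> S" using B'(1) BS unfolding B0_def by blast
          then show "hm m \<delta> < \<delta>" by (rule hm_lt)
        qed
        obtain J' where st': "stationary kap {\<delta>\<in>B'. hm m \<delta> = J'}"
          using fodor[where k=kap and h="hm m", OF regK0 unc B'(2) hr] by blast
        have s1: "{\<delta>\<in>B'. hm m \<delta> = J'} \<subseteq> B0" using B'(1) by blast
        have s3: "\<forall>m'<Suc m. \<forall>\<delta>1\<in>{\<delta>\<in>B'. hm m \<delta> = J'}. \<forall>\<delta>2\<in>{\<delta>\<in>B'. hm m \<delta> = J'}. hm m' \<delta>1 = hm m' \<delta>2"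
          using B'(3) by (auto simp: less_Suc_eq)
        show ?case by (rule exI[of _ "{\<delta>\<in>B'. hm m \<delta> = J'}"]) (intro conjI s1 st' s3)
      qed
    qed
    obtain Bk where Bk: "Bk \<subseteq> B0" "stationary kap Bk" "\<forall>m'<K. \<forall>\<delta>1\<in>Bk. \<forall>\<delta>2\<in>Bk. hm m' \<delta>1 = hm m' \<delta>2"
      using iter by blast
    have BkS: "Bk \<subseteq> S" using Bk(1) BS unfolding B0_def by blast
    obtain \<delta>1 where d1: "\<delta>1 \<in> Bk" using stat_ne[where k=kap, OF regK0 unc Bk(2)] by blast
    define e where "e = play gen (lamin \<delta>1) [] K"
    have same: "\<And>\<delta>. \<delta> \<in> Bk \<Longrightarrow> play gen (lamin \<delta>) [] K = e"
    proof -
      fix \<delta> assume d: "\<delta> \<in> Bk"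
      have "\<forall>m<length [] + K. lamin \<delta> m = lamin \<delta>1 m"
      proof (intro allI impI)
        fix m assume "m < length [] + K"
        then have "m < K" by simp
        then have "hm m \<delta> = hm m \<delta>1" using Bk(3) d d1 by blast
        moreover have "\<delta> \<in> S" "\<delta>1 \<in> S" using d d1 BkS by auto
        ultimately show "lamin \<delta> m = lamin \<delta>1 m" using hm_eq by blast
      qed
      then show "play gen (lamin \<delta>) [] K = e" unfolding e_def by (rule play_dep)
    qed
    have e_lt: "\<forall>m<length e. e ! m < lamin \<delta>1 m" unfolding e_def
    proof (rule play_ent)
      show "\<delta>1 \<in> S" using d1 BkS by blast
    qed
    have e_lam: "set e \<subseteq> {..<lam}"
    proof
      fix x assume "x \<in> set e"
      then obtain m where "m < length e" "x = e ! m" by (metis in_set_conv_nth)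
      then show "x \<in> {..<lam}" using e_lt lamin_lam[of \<delta>1 m] d1 BkS by (auto intro: less_trans)
    qed
    have fe: "(\<forall>\<nu>\<in>f e. seq_vals \<nu> \<subseteq> {..<lam}) \<and> f e \<prec> {..<kap}" using f_ok e_lam by blast
    define jx where "jx x = (LEAST j. j < kap \<and> x < lami j)" for x
    have jx: "\<And>x. x < lam \<Longrightarrow> jx x < kap \<and> x < lami (jx x)"
    proof -
      fix x assume "x < lam"
      then have "\<exists>j. j < kap \<and> x < lami j" using lami_sup by blast
      then show "jx x < kap \<and> x < lami (jx x)" unfolding jx_def by (rule LeastI_ex)
    qed
    have "\<forall>\<nu>\<in>f e. \<exists>j<kap. jx ` seq_vals \<nu> \<subseteq> {..<j}"
    proof
      fix \<nu> assume "\<nu> \<in> f e"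
      then have sv: "seq_vals \<nu> \<subseteq> {..<lam}" using fe by blast
      show "\<exists>j<kap. jx ` seq_vals \<nu> \<subseteq> {..<j}"
      proof (rule regC_count[where k=kap, OF regK0 unc])
        show "jx ` seq_vals \<nu> \<subseteq> {..<kap}" using sv jx by auto
        show "countable (jx ` seq_vals \<nu>)" by (simp add: seq_vals_countable)
      qed
    qed
    from bchoice[OF this] obtain jn where jn0: "\<forall>\<nu>\<in>f e. jn \<nu> < kap \<and> jx ` seq_vals \<nu> \<subseteq> {..<jn \<nu>}"
      by (elim exE)
    have jn: "\<And>\<nu>. \<nu> \<in> f e \<Longrightarrow> jn \<nu> < kap \<and> jx ` seq_vals \<nu> \<subseteq> {..<jn \<nu>}"
      using jn0 by (rule bspec)
    have "\<exists>j<kap. jn ` f e \<subseteq> {..<j}"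
    proof (rule regC[where k=kap, OF regK0])
      show "jn ` f e \<subseteq> {..<kap}"
      proof
        fix y assume "y \<in> jn ` f e"
        then obtain \<nu> where "\<nu> \<in> f e" "y = jn \<nu>" by blast
        then show "y \<in> {..<kap}" using jn[of \<nu>] by simp
      qed
      have "jn ` f e \<lesssim> f e" by (rule image_lepoll)
      then have "jn ` f e \<prec> {..<kap}" using lesspoll_trans1 conjunct2[OF fe] by blast
      then show "\<not> jn ` f e \<approx> {..<kap}" unfolding lesspoll_def by blast
    qed
    then obtain j0 where j0: "j0 < kap" "jn ` f e \<subseteq> {..<j0}" by blast
    obtain \<delta> where d: "\<delta> \<in> Bk" "j0 < \<delta>" using stat_unb[where k=kap, OF regK0 unc Bk(2) j0(1)] by blast
    have dS: "\<delta> \<in> S" using d BkS by blast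
    have dB0: "\<delta> \<in> B0" using d(1) Bk(1) by blast
    then have "\<delta> \<in> B" unfolding B0_def by blast
    then have "\<not> fc \<delta> (play gen (lamin \<delta>) [] (kk \<delta>))" by (rule kk)
    then have "\<not> fc \<delta> e" using kK[OF dB0] same[OF d(1)] by simp
    moreover have "\<forall>m<length e. e ! m < lamin \<delta> m" using play_ent[OF dS, of K] same[OF d(1)] by simp
    ultimately obtain \<nu> where nu: "\<nu> \<in> f e" "\<not> seq_vals \<nu> \<subseteq> {..<lami \<delta>}" unfolding fc_def by blast
    then obtain x where x: "x \<in> seq_vals \<nu>" "\<not> x < lami \<delta>" by auto
    have xl: "x < lam" using fe nu(1) x(1) by blast
    have "jx x < jn \<nu>" using jn[OF nu(1)] x(1) by blast
    moreover have "jn \<nu> < j0" using j0 nu(1) by blast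
    ultimately have "jx x < \<delta>" using d(2) by (meson less_trans)
    moreover have "\<delta> < kap" using dS Slim by blast
    ultimately have "lami (jx x) < lami \<delta>" using lami_incr by blast
    then have "x < lami \<delta>" using jx[OF xl] by (meson less_trans)
    then show ?thesis using x(2) by simp
  qed
qed


end
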